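(* In Setup A, fix $\tau\in\mathcal{O}$ and for $0\le i\le l-1$ define $H_{\tau,i}:M_{p^i\tau}\to M_{p^{i+1}\tau}$ by $H_{\tau,i}=F$ if $f(p^i\tau^* )\ge f(\tau^* )$ and $H_{\tau,i}=F+V'$ if $f(p^i\tau^* )<f(\tau^* )$. Assume (a) $\dim\big(\pi_\tau\circ H_{\tau,l-1}\circ\cdots\circ H_{\tau,0}(M_\tau)\big)=f(\tau^* )$, and (b) $w_{\tau'}$ is maximal for every $\tau'\in\mathcal{O}$ with $f(\tau'^* )<f(\tau^* )$. Then: (1) $H_{\tau,i}\circ\cdots\circ H_{\tau,0}(M_\tau)=M_{p^{i+1}\tau,f(\tau^* )}$ for all $0\le i\le l-1$; (2) $w_\tau$ is maximal; (3) $w_{\tau'}$ is maximal for every $\tau'\in\mathcal{O}$ with $f(\tau'^* )=f(\tau^* )$.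
   Context: Setup A. Let $k_0=\overline{\mathbb{F}}_p$ with Frobenius $\sigma$. Let $\mathcal{O}$ be a finite set of size $l$ with a cyclic permutation $\tau'\mapsto p\tau'$ (so $\mathcal{O}=\{\tau,p\tau,\dots,p^{l-1}\tau\}$ and $p^l\tau=\tau$). Fix an integer $g\ge1$ and, for each $\tau'\in\mathcal{O}$, non-negative integers $f(\tau')$, $f(\tau'^* )$ with $f(\tau')+f(\tau'^* )=g$ (the notation $f(p^i\tau^* )$ means $f((p^i\tau)^* )$). Let $M=\bigoplus_{\tau'\in\mathcal{O}}M_{\tau'}$ where $M_{\tau'}$ has $k_0$-basis $e_{\tau',1},\dots,e_{\tau',g}$; write $M_{\tau',k}=\mathrm{Span}(e_{\tau',1},\dots,e_{\tau',k})$ and $M_{\tau',a,b}=\mathrm{Span}(e_{\tau',a},\dots,e_{\tau',b})$. For each $\tau'$ fix increasing sequences $j_{\tau',1}<\dots<j_{\tau',f(\tau')}$ and $i_{\tau',1}<\dots<i_{\tau',f(\tau'^* )}$ partitioning $\{1,\dots,g\}$, and let $w_{\tau'}\in\mathrm{Sym}_g$ be given by $w_{\tau'}(j_{\tau',k})=k$, $w_{\tau'}(i_{\tau',k})=f(\tau')+k$. Let $F:M\to M$ be the $\sigma$-semilinear map with $F(e_{\tau',j})=e_{p\tau',\,w_{\tau'}(j)-f(\tau')}$ if $w_{\tau'}(j)>f(\tau')$ and $F(e_{\tau',j})=0$ otherwise. Let $V':M\to M$ be the semilinear map with $V'(e_{\tau',j})=e_{p\tau',\,f(\tau'^* )+w_{\tau'}(j)}$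 if $w_{\tau'}(j)\le f(\tau')$ and $V'(e_{\tau',j})=0$ otherwise. Let $Q_{\tau'}=\mathrm{Span}(e_{\tau',i_{\tau',k}})$, $Q^\vee_{\tau'^*}=\mathrm{Span}(e_{\tau',j_{\tau',k}})$ (so $M_{\tau'}=Q_{\tau'}\oplus Q^\vee_{\tau'^*}$), $Q=\bigoplus Q_{\tau'}$, and $\pi_{\tau'}:M_{\tau'}\to Q_{\tau'}$ the projection with kernel $Q^\vee_{\tau'^*}$. We say $w_{\tau'}$ is maximal if $i_{\tau',k}=k$ for all $1\le k\le f(\tau'^* )$, i.e. $w_{\tau'}(k)=f(\tau')+k$ for $k\le f(\tau'^* )$ and $w_{\tau'}(k)=k-f(\tau'^* )$ for $k>f(\tau'^* )$ (equivalently $\ker F\cap M_{\tau',f(\tau'^* )}=0$; this is the permutation of maximal length). *)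

theory Defs
  imports Main "HOL-Library.Function_Algebras" "HOL-Computational_Algebra.Polynomial"
begin

text \<open>The orbit O is indexed by residues c in {0..<l}; index c stands for
  p^c tau_0, so the Frobenius action c |-> p c is c |-> (c+1) mod l.  For an index c,
  f c = f(tau') and fs c = f(tau'^*).  Each M_{tau'} is modelled as the space of
  functions nat => k supported on the basis indices {1..g}; e_j is the j-th indicator.\<close>

type_synonym 'k vect = "nat \<Rightarrow> 'k"

definition bvec :: "nat \<Rightarrow> 'k::field vect" where
  "bvec j = (\<lambda>x. if x = j then 1 else 0)"

definition scal :: "'k::field \<Rightarrow> 'k vect \<Rightarrow> 'k vect" where
  "scal a u = (\<lambda>x. a * u x)"

text \<open>M_{tau',k} = Span(e_1,...,e_k); M_{tau'} = Msub g.\<close>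
definition Msub :: "nat \<Rightarrow> 'k::field vect set" where
  "Msub k = {v. \<forall>j. (j < 1 \<or> k < j) \<longrightarrow> v j = 0}"

text \<open>The permutation w_{tau'} built from the sequences J (the j's, length fc) and
  I (the i's, length fsc).\<close>
definition wperm :: "nat \<Rightarrow> nat \<Rightarrow> (nat \<Rightarrow> nat) \<Rightarrow> (nat \<Rightarrow> nat) \<Rightarrow> nat \<Rightarrow> nat" where
  "wperm fc fsc J I j =
     (if \<exists>k\<in>{1..fc}. J k = j then (THE k. k \<in> {1..fc} \<and> J k = j)
      else fc + (THE k. k \<in> {1..fsc} \<and> I k = j))"

definition Fmap :: "('k::field \<Rightarrow> 'k) \<Rightarrow> nat \<Rightarrow> nat \<Rightarrow> nat \<Rightarrow> (nat \<Rightarrow> nat) \<Rightarrow> (nat \<Rightarrow> nat)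
                    \<Rightarrow> 'k vect \<Rightarrow> 'k vect" where
  "Fmap \<sigma> g fc fsc J I v =
     (\<Sum>j\<in>{1..g}. scal (\<sigma> (v j))
        (if fc < wperm fc fsc J I j then bvec (wperm fc fsc J I j - fc) else 0))"

definition Vmap :: "('k::field \<Rightarrow> 'k) \<Rightarrow> nat \<Rightarrow> nat \<Rightarrow> nat \<Rightarrow> (nat \<Rightarrow> nat) \<Rightarrow> (nat \<Rightarrow> nat)
                    \<Rightarrow> 'k vect \<Rightarrow> 'k vect" where
  "Vmap \<sigma> g fc fsc J I v =
     (\<Sum>j\<in>{1..g}. scal (\<sigma> (v j))
        (if wperm fc fsc J I j \<le> fc then bvec (fsc + wperm fc fsc J I j) else 0))"

definition Qproj :: "nat \<Rightarrow> (nat \<Rightarrow> nat) \<Rightarrow> 'k::field vect \<Rightarrow> 'k vect" where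
  "Qproj fsc I v = (\<lambda>j. if j \<in> I ` {1..fsc} then v j else 0)"

definition maximal :: "nat \<Rightarrow> (nat \<Rightarrow> nat) \<Rightarrow> bool" where
  "maximal fsc I \<longleftrightarrow> (\<forall>k\<in>{1..fsc}. I k = k)"

definition Hmap :: "('k::field \<Rightarrow> 'k) \<Rightarrow> nat \<Rightarrow> nat \<Rightarrow> (nat \<Rightarrow> nat) \<Rightarrow> (nat \<Rightarrow> nat)
                    \<Rightarrow> (nat \<Rightarrow> nat \<Rightarrow> nat) \<Rightarrow> (nat \<Rightarrow> nat \<Rightarrow> nat) \<Rightarrow> nat \<Rightarrow> nat
                    \<Rightarrow> 'k vect \<Rightarrow> 'k vect" where
  "Hmap \<sigma> l g f fs J I t i =
     (let c = (t + i) mod l in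
      if fs t \<le> fs c then Fmap \<sigma> g (f c) (fs c) (J c) (I c)
      else (\<lambda>v. Fmap \<sigma> g (f c) (fs c) (J c) (I c) v + Vmap \<sigma> g (f c) (fs c) (J c) (I c) v))"

fun Hcomp :: "(nat \<Rightarrow> 'a \<Rightarrow> 'a) \<Rightarrow> nat \<Rightarrow> 'a \<Rightarrow> 'a" where
  "Hcomp H 0 = H 0"
| "Hcomp H (Suc i) = H (Suc i) \<circ> Hcomp H i"

abbreviation kdim :: "'k::field vect set \<Rightarrow> nat" where
  "kdim S \<equiv> vector_space.dim (scal :: 'k \<Rightarrow> 'k vect \<Rightarrow> 'k vect) S"

end

theory Submission
  imports Defs
begin


definition wf :: "nat \<Rightarrow> nat \<Rightarrow> nat \<Rightarrow> (nat \<Rightarrow> nat) \<Rightarrow> (nat \<Rightarrow> nat) \<Rightarrow> bool" where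
 "wf g f fs J I \<longleftrightarrow> f + fs = g \<and> strict_mono_on {1..f} J \<and> strict_mono_on {1..fs} I
   \<and> J`{1..f} \<union> I`{1..fs} = {1..g} \<and> J`{1..f} \<inter> I`{1..fs} = {}"

lemma sum_app: "(\<Sum>a\<in>A. (h a :: 'k::comm_monoid_add vect)) x = (\<Sum>a\<in>A. h a x)"
  by (induct A rule: infinite_finite_induct) auto

lemma mono_lower:
  assumes "\<And>a b. a\<in>{1..n} \<Longrightarrow> b\<in>{1..n} \<Longrightarrow> a < b \<Longrightarrow> h a < (h b::nat)"
    and "\<And>k. k\<in>{1..n} \<Longrightarrow> h k \<ge> c + 1"
  shows "k\<in>{1..n} \<Longrightarrow> h k \<ge> c + k"
proof (induct k)
  case 0 then show ?case by simp
next
  case (Suc k)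
  show ?case
  proof (cases "k = 0")
    case True then show ?thesis using assms(2) Suc by simp
  next
    case False
    then have "h k < h (Suc k)" using assms(1)[of k "Suc k"] Suc by auto
    moreover have "h k \<ge> c + k" using Suc False by auto
    ultimately show ?thesis by simp
  qed
qed

lemma mono_upper:
  assumes "\<And>a b. a\<in>{1..n} \<Longrightarrow> b\<in>{1..n} \<Longrightarrow> a < b \<Longrightarrow> h a < (h b::nat)"
    and "\<And>k. k\<in>{1..n} \<Longrightarrow> h k \<le> b"
  shows "k\<in>{1..n} \<Longrightarrow> h k + (n - k) \<le> b"
proof -
  have "\<forall>k. n - k = d \<longrightarrow> k\<in>{1..n} \<longrightarrow> h k + (n - k) \<le> b" for d
  proof (induct d)
    case 0 then show ?case using assms(2) by auto
  next
    case (Suc d)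
    show ?case
    proof (intro allI impI)
      fix k assume k: "n - k = Suc d" "k \<in> {1..n}"
      then have "h k < h (Suc k)" using assms(1)[of k "Suc k"] by auto
      moreover have "h (Suc k) + d \<le> b" using Suc.hyps[rule_format, of "Suc k"] k by auto
      ultimately show "h k + (n - k) \<le> b" using k by auto
    qed
  qed
  then show "k\<in>{1..n} \<Longrightarrow> h k + (n - k) \<le> b" by blast
qed

context
  fixes g f fs :: nat and J I :: "nat \<Rightarrow> nat"
  assumes W: "wf g f fs J I"
begin

lemma Jsm: "a\<in>{1..f} \<Longrightarrow> b\<in>{1..f} \<Longrightarrow> a < b \<Longrightarrow> J a < J b"
  using W unfolding wf_def by (meson strict_mono_onD)
lemma Ism: "a\<in>{1..fs} \<Longrightarrow> b\<in>{1..fs} \<Longrightarrow> a < b \<Longrightarrow> I a < I b"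
  using W unfolding wf_def by (meson strict_mono_onD)
lemma Jinj: "inj_on J {1..f}"
  using W unfolding wf_def using strict_mono_on_imp_inj_on by blast
lemma Iinj: "inj_on I {1..fs}"
  using W unfolding wf_def using strict_mono_on_imp_inj_on by blast
lemma Irng: "k\<in>{1..fs} \<Longrightarrow> I k \<in> {1..g}"
  using W unfolding wf_def by blast
lemma Jrng: "k\<in>{1..f} \<Longrightarrow> J k \<in> {1..g}"
  using W unfolding wf_def by blast
lemma Ige: "k\<in>{1..fs} \<Longrightarrow> k \<le> I k"
  using mono_lower[of fs I 0 k] Ism Irng by auto

lemma wpJ: "k\<in>{1..f} \<Longrightarrow> wperm f fs J I (J k) = k"
  unfolding wperm_def using Jinj by (auto intro!: the_equality dest: inj_onD)
lemma wpI: "k\<in>{1..fs} \<Longrightarrow> wperm f fs J I (I k) = f + k"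
proof -
  assume k: "k\<in>{1..fs}"
  have "\<not>(\<exists>k'\<in>{1..f}. J k' = I k)" using W k unfolding wf_def by blast
  then show ?thesis unfolding wperm_def using Iinj k by (auto intro!: the_equality dest: inj_onD)
qed

lemma split_sum: "(\<Sum>j\<in>{1..g}. h j) = (\<Sum>k\<in>{1..f}. h (J k)) + (\<Sum>k\<in>{1..fs}. (h (I k) :: 'a::comm_monoid_add))"
proof -
  have "(\<Sum>j\<in>{1..g}. h j) = (\<Sum>j\<in>J`{1..f}. h j) + (\<Sum>j\<in>I`{1..fs}. h j)"
    using W unfolding wf_def by (metis finite_atLeastAtMost finite_imageI sum.union_disjoint)
  also have "\<dots> = (\<Sum>k\<in>{1..f}. h (J k)) + (\<Sum>k\<in>{1..fs}. h (I k))"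
    using Jinj Iinj by (simp add: sum.reindex)
  finally show ?thesis .
qed

lemma Fpt: "Fmap \<sigma> g f fs J I v x = (if x \<in> {1..fs} then \<sigma> (v (I x)) else 0)"
proof -
  define T where "T j = \<sigma> (v j) *
        (if f < wperm f fs J I j then bvec (wperm f fs J I j - f) x else 0)" for j
  have "Fmap \<sigma> g f fs J I v x = (\<Sum>j\<in>{1..g}. T j)"
    unfolding Fmap_def sum_app T_def by (intro sum.cong) (auto simp: scal_def)
  also have "\<dots> = (\<Sum>k\<in>{1..f}. T (J k)) + (\<Sum>k\<in>{1..fs}. T (I k))" by (rule split_sum)
  also have "(\<Sum>k\<in>{1..f}. T (J k)) = 0" by (rule sum.neutral) (auto simp: wpJ T_def)
  also have "(\<Sum>k\<in>{1..fs}. T (I k)) = (\<Sum>k\<in>{1..fs}. (if k = x then \<sigma> (v (I k)) else 0))"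
    by (rule sum.cong) (auto simp: wpI T_def bvec_def)
  also have "\<dots> = (if x \<in> {1..fs} then \<sigma> (v (I x)) else 0)"
    by (simp add: sum.delta)
  finally show ?thesis by simp
qed

lemma Vpt: "Vmap \<sigma> g f fs J I v x = (if fs < x \<and> x - fs \<in> {1..f} then \<sigma> (v (J (x - fs))) else 0)"
proof -
  define T where "T j = \<sigma> (v j) *
        (if wperm f fs J I j \<le> f then bvec (fs + wperm f fs J I j) x else 0)" for j
  have "Vmap \<sigma> g f fs J I v x = (\<Sum>j\<in>{1..g}. T j)"
    unfolding Vmap_def sum_app T_def by (intro sum.cong) (auto simp: scal_def)
  also have "\<dots> = (\<Sum>k\<in>{1..f}. T (J k)) + (\<Sum>k\<in>{1..fs}. T (I k))" by (rule split_sum)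
  also have "(\<Sum>k\<in>{1..fs}. T (I k)) = 0" by (rule sum.neutral) (auto simp: wpI T_def)
  also have "(\<Sum>k\<in>{1..f}. T (J k)) = (\<Sum>k\<in>{1..f}. (if k = x - fs then (if fs < x then \<sigma> (v (J k)) else 0) else 0))"
    by (rule sum.cong) (auto simp: wpJ T_def bvec_def)
  also have "\<dots> = (if fs < x \<and> x - fs \<in> {1..f} then \<sigma> (v (J (x - fs))) else 0)"
    by (simp add: sum.delta)
  finally show ?thesis by simp
qed

lemma F_mono: "\<sigma> 0 = 0 \<Longrightarrow> v \<in> Msub m \<Longrightarrow> Fmap \<sigma> g f fs J I v \<in> Msub m"
proof -
  assume s0: "\<sigma> 0 = 0" and v: "v \<in> Msub m"
  have "Fmap \<sigma> g f fs J I v x = 0" if x: "x < 1 \<or> m < x" for x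
  proof (cases "x \<in> {1..fs}")
    case True
    then have "m < I x" using x Ige[OF True] by auto
    then have "v (I x) = 0" using v unfolding Msub_def by blast
    then show ?thesis using True s0 by (simp add: Fpt)
  next
    case False then show ?thesis by (simp only: Fpt if_not_P[OF False] if_False)
  qed
  then show ?thesis unfolding Msub_def by blast
qed

lemma F_into: "Fmap \<sigma> g f fs J I v \<in> Msub fs"
  unfolding Msub_def by (auto simp: Fpt)

lemma F_drop: "\<sigma> 0 = 0 \<Longrightarrow> 1 \<le> r \<Longrightarrow> r \<le> fs \<Longrightarrow> I r \<noteq> r \<Longrightarrow> v \<in> Msub r
   \<Longrightarrow> Fmap \<sigma> g f fs J I v \<in> Msub (r - 1)"
proof -
  assume a: "\<sigma> 0 = 0" "1 \<le> r" "r \<le> fs" "I r \<noteq> r" "v \<in> Msub r"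
  have "I r > r" using Ige[of r] a by auto
  then have "v (I r) = 0" using a unfolding Msub_def by auto
  have m: "Fmap \<sigma> g f fs J I v \<in> Msub r" using F_mono[of \<sigma> v r, OF a(1) a(5)] .
  have "Fmap \<sigma> g f fs J I v x = 0" if x: "x < 1 \<or> r - 1 < x" for x
  proof (cases "x = r")
    case True then show ?thesis using a \<open>v (I r) = 0\<close> by (simp add: Fpt)
  next
    case False then have "x < 1 \<or> r < x" using x by auto
    then show ?thesis using m unfolding Msub_def by blast
  qed
  then show ?thesis unfolding Msub_def by blast
qed

lemma F_onto:
  assumes s: "\<And>a. \<sigma> (s a) = a" and s0: "\<sigma> 0 = 0" and m: "m \<le> fs" and u: "u \<in> Msub m"
  shows "\<exists>v. v \<in> Msub g \<and> (\<forall>y. y \<notin> I`{1..m} \<longrightarrow> v y = 0) \<and> Fmap \<sigma> g f fs J I v = u"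
proof -
  define v where "v y = (if y \<in> I`{1..m} then s (u (inv_into {1..m} I y)) else 0)" for y
  have im: "inj_on I {1..m}" using Iinj m by (auto intro: inj_on_subset)
  have "Fmap \<sigma> g f fs J I v = u"
  proof (rule ext)
    fix x show "Fmap \<sigma> g f fs J I v x = u x"
  proof (cases "x \<in> {1..fs}")
    case True
    show ?thesis
    proof (cases "x \<le> m")
      case True
      then have "x \<in> {1..m}" using \<open>x\<in>{1..fs}\<close> by auto
      then show ?thesis using im s \<open>x\<in>{1..fs}\<close> by (simp add: Fpt v_def)
    next
      case False
      have "I x \<notin> I`{1..m}"
      proof
        assume "I x \<in> I`{1..m}"
        then obtain k where "k\<in>{1..m}" "I x = I k" by auto
        then show False using Iinj \<open>x\<in>{1..fs}\<close> m False by (auto dest: inj_onD)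
      qed
      then show ?thesis using False u s0 \<open>x\<in>{1..fs}\<close> by (simp add: Fpt v_def Msub_def)
    qed
  next
    case False then show ?thesis using u m by (cases "x = 0") (auto simp: Fpt Msub_def)
  qed
  qed
  moreover have "v \<in> Msub g"
  proof -
    have "v y = 0" if "y < 1 \<or> g < y" for y
    proof -
      have "y \<notin> I`{1..m}" using Irng m that by fastforce
      then show ?thesis by (simp add: v_def)
    qed
    then show ?thesis unfolding Msub_def by blast
  qed
  moreover have "\<forall>y. y \<notin> I`{1..m} \<longrightarrow> v y = 0" by (simp add: v_def)
  ultimately show ?thesis by blast
qed

lemma max_J: assumes mx: "\<forall>k\<in>{1..fs}. I k = k" shows "k\<in>{1..f} \<Longrightarrow> J k = fs + k"
proof -
  assume k: "k\<in>{1..f}"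
  have "I`{1..fs} = (\<lambda>k. k) ` {1..fs}" using mx by (intro image_cong) auto
  then have I: "I`{1..fs} = {1..fs}" by simp
  have r: "J k \<ge> fs + 1 \<and> J k \<le> g" if k: "k\<in>{1..f}" for k
  proof -
    have a: "J k \<in> {1..g}" by (rule Jrng[OF k])
    have "J k \<notin> I`{1..fs}" using W k unfolding wf_def by blast
    then have "J k \<notin> {1..fs}" using I by simp
    then show ?thesis using a by auto
  qed
  have "J k \<ge> fs + k" using mono_lower[of f J fs k] Jsm r k by auto
  moreover have "J k + (f - k) \<le> g" using mono_upper[of f J g k] Jsm r k by auto
  ultimately show ?thesis using W k unfolding wf_def by auto
qed

lemma FV_pt: assumes mx: "\<forall>k\<in>{1..fs}. I k = k"
  shows "Fmap \<sigma> g f fs J I v x + Vmap \<sigma> g f fs J I v x = (if x \<in> {1..g} then \<sigma> (v x) else 0)"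
proof -
  have g: "g = f + fs" using W unfolding wf_def by simp
  show ?thesis
  proof (cases "x \<in> {1..fs}")
    case True
    then have nf: "\<not> fs < x" by auto
    have x: "x \<in> {1..g}" using True g by auto
    have "Fmap \<sigma> g f fs J I v x = \<sigma> (v x)" using True mx by (simp add: Fpt)
    moreover have "Vmap \<sigma> g f fs J I v x = 0" using nf by (simp add: Vpt)
    ultimately show ?thesis using x by simp
  next
    case False
    show ?thesis
    proof (cases "fs < x \<and> x \<le> g")
      case True
      then have xk: "x - fs \<in> {1..f}" using g by auto
      have "J (x - fs) = x" using max_J[OF mx xk] True by simp
      have "Fmap \<sigma> g f fs J I v x = 0" using False by (simp only: Fpt if_not_P[OF False] if_False)
      moreover have "Vmap \<sigma> g f fs J I v x = \<sigma> (v x)" using True xk \<open>J (x - fs) = x\<close> by (simp add: Vpt)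
      moreover have "x \<in> {1..g}" using True by auto
      ultimately show ?thesis by simp
    next
      case F2: False
      then have nv: "\<not> (fs < x \<and> x - fs \<in> {1..f})" using g by auto
      have xg: "x \<notin> {1..g}" using F2 False by auto
      have "Fmap \<sigma> g f fs J I v x = 0" using False by (simp only: Fpt if_not_P[OF False] if_False)
      moreover have "Vmap \<sigma> g f fs J I v x = 0" by (simp only: Vpt if_not_P[OF nv] if_False)
      ultimately show ?thesis by (simp only: if_not_P[OF xg] add_0)
    qed
  qed
qed

end

lemma vs: "vector_space (scal :: 'k::field \<Rightarrow> 'k vect \<Rightarrow> 'k vect)"
  by unfold_locales (auto simp: scal_def fun_eq_iff algebra_simps)

lemma span_supp:
  fixes v :: "'k::field vect"
  assumes A: "finite A" and v: "\<forall>x. x \<notin> A \<longrightarrow> v x = 0"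
  shows "v \<in> module.span scal (bvec ` A)"
proof -
  interpret vector_space "scal :: 'k \<Rightarrow> 'k vect \<Rightarrow> 'k vect" by (rule vs)
  have "v = (\<Sum>j\<in>A. scal (v j) (bvec j))"
  proof (rule ext)
    fix x
    have "(\<Sum>j\<in>A. scal (v j) (bvec j)) x = (\<Sum>j\<in>A. if j = x then v j else 0)"
      unfolding sum_app by (rule sum.cong) (auto simp: scal_def bvec_def)
    also have "\<dots> = v x" using A v by (simp add: sum.delta')
    finally show "v x = (\<Sum>j\<in>A. scal (v j) (bvec j)) x" by simp
  qed
  also have "\<dots> \<in> span (bvec ` A)"
    by (intro span_sum span_scale span_base) auto
  finally show ?thesis .
qed

lemma dim_supp:
  fixes V :: "'k::field vect set"
  assumes A: "finite A" and V: "\<And>v x. v \<in> V \<Longrightarrow> x \<notin> A \<Longrightarrow> v x = 0"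
  shows "kdim V \<le> card A"
proof -
  interpret vector_space "scal :: 'k \<Rightarrow> 'k vect \<Rightarrow> 'k vect" by (rule vs)
  have "V \<subseteq> span (bvec ` A)" using span_supp A V by blast
  then have "dim V \<le> card (bvec ` A :: 'k vect set)" using A dim_le_card[of V "bvec ` A"] by auto
  also have "\<dots> \<le> card A" by (rule card_image_le[OF A])
  finally show ?thesis .
qed

lemma pth_root:
  fixes a :: "'k::field"
  assumes p: "p > 0" and alg: "\<And>q :: 'k poly. degree q \<ge> 1 \<Longrightarrow> \<exists>x. poly q x = 0"
  shows "\<exists>b. b ^ p = a"
proof -
  have d: "degree (monom (1::'k) p + [:-a:]) = p"
    by (subst degree_add_eq_left) (auto simp: degree_monom_eq p)
  have "\<exists>x. poly (monom (1::'k) p + [:-a:]) x = 0" using alg[of "monom (1::'k) p + [:-a:]"] d p by simp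
  then obtain x where "poly (monom (1::'k) p + [:-a:]) x = 0" by blast
  then show ?thesis by (auto simp: poly_monom)
qed


theorem proposition4p5:
  fixes p :: nat and \<sigma> :: "'k::field \<Rightarrow> 'k"
    and l g t :: nat and f fs :: "nat \<Rightarrow> nat" and J I :: "nat \<Rightarrow> nat \<Rightarrow> nat"
  assumes prime_p: "prime p"
    and char_k: "CHAR('k) = p"
    and alg_closed: "\<And>q :: 'k poly. degree q \<ge> 1 \<Longrightarrow> \<exists>x. poly q x = 0"
    and alg_over_Fp: "\<And>x :: 'k. \<exists>n\<ge>1. x ^ (p ^ n) = x"
    and frob: "\<sigma> = (\<lambda>x. x ^ p)"
    and g_pos: "g \<ge> 1"
    and t_in: "t < l"
    and f_sum: "\<And>c. c < l \<Longrightarrow> f c + fs c = g"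
    and J_mono: "\<And>c. c < l \<Longrightarrow> strict_mono_on {1..f c} (J c)"
    and I_mono: "\<And>c. c < l \<Longrightarrow> strict_mono_on {1..fs c} (I c)"
    and JI_cover: "\<And>c. c < l \<Longrightarrow> J c ` {1..f c} \<union> I c ` {1..fs c} = {1..g}"
    and JI_disj: "\<And>c. c < l \<Longrightarrow> J c ` {1..f c} \<inter> I c ` {1..fs c} = {}"
    and hyp_a: "kdim (Qproj (fs t) (I t) `
                  (Hcomp (Hmap \<sigma> l g f fs J I t) (l - 1) ` (Msub g :: 'k vect set))) = fs t"
    and hyp_b: "\<And>c. c < l \<Longrightarrow> fs c < fs t \<Longrightarrow> maximal (fs c) (I c)"
  shows "(\<forall>i<l. Hcomp (Hmap \<sigma> l g f fs J I t) i ` (Msub g :: 'k vect set) = Msub (fs t))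
         \<and> maximal (fs t) (I t)
         \<and> (\<forall>c<l. fs c = fs t \<longrightarrow> maximal (fs c) (I c))"
  proof -
  have p0: "p > 0" using prime_p prime_gt_0_nat by blast
  have s0: "\<sigma> 0 = 0" using frob p0 by simp
  have "\<forall>a. \<exists>b. \<sigma> b = a" using pth_root[OF p0 alg_closed] frob by blast
  then obtain s where s: "\<And>a. \<sigma> (s a) = a" by metis
  define r where "r = fs t"
  define H where "H = Hmap \<sigma> l g f fs J I t"
  define cc where "cc i = (t + i) mod l" for i
  have l0: "l > 0" using t_in by simp
  have ccl: "cc i < l" for i using l0 by (simp add: cc_def)
  have cc0: "cc 0 = t" using t_in by (simp add: cc_def)
  have W: "wf g (f c) (fs c) (J c) (I c)" if "c < l" for c
    using f_sum[OF that] J_mono[OF that] I_mono[OF that] JI_cover[OF that] JI_disj[OF that]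
    unfolding wf_def by blast
  have rg: "r \<le> g" using f_sum[OF t_in] r_def by simp
  have HF: "H i = Fmap \<sigma> g (f (cc i)) (fs (cc i)) (J (cc i)) (I (cc i))" if "r \<le> fs (cc i)" for i
    using that by (simp add: H_def Hmap_def cc_def r_def Let_def)
  have HV: "H i = (\<lambda>v. Fmap \<sigma> g (f (cc i)) (fs (cc i)) (J (cc i)) (I (cc i)) v
                 + Vmap \<sigma> g (f (cc i)) (fs (cc i)) (J (cc i)) (I (cc i)) v)" if "fs (cc i) < r" for i
    using that by (simp add: H_def Hmap_def cc_def r_def Let_def)
  have Hmax: "H i v = (\<lambda>x. if x \<in> {1..g} then \<sigma> (v x) else 0)" if "fs (cc i) < r" for i v
  proof -
    have "maximal (fs (cc i)) (I (cc i))" using hyp_b[OF ccl] that r_def by simp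
    then have mx: "\<forall>k\<in>{1..fs (cc i)}. I (cc i) k = k" unfolding maximal_def .
    show ?thesis unfolding HV[OF that] plus_fun_apply[symmetric]
      by (rule ext) (simp only: plus_fun_apply FV_pt[OF W[OF ccl] mx])
  qed
  have Hmono: "H i v \<in> Msub m" if "v \<in> Msub m" for i m v
  proof (cases "r \<le> fs (cc i)")
    case True then show ?thesis using F_mono[where \<sigma>=\<sigma> and v=v and m=m, OF W[OF ccl[of i]] s0 that] HF by simp
  next
    case False then show ?thesis using that s0 unfolding Msub_def by (simp add: Hmax)
  qed
  have img: "Hcomp H (Suc i) ` X = H (Suc i) ` (Hcomp H i ` X)" for i X
    by (simp add: image_comp)
  have H0: "H 0 = Fmap \<sigma> g (f t) (fs t) (J t) (I t)" using HF[of 0] cc0 r_def by simp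
  have S0: "Hcomp H 0 ` Msub g = Msub r"
  proof
    show "Hcomp H 0 ` Msub g \<subseteq> Msub r"
      using F_into[where \<sigma>=\<sigma>, OF W[OF t_in]] H0 r_def by auto
    show "Msub r \<subseteq> Hcomp H 0 ` Msub g"
    proof
      fix u :: "'k vect" assume u: "u \<in> Msub r"
      obtain v where "v \<in> Msub g" "Fmap \<sigma> g (f t) (fs t) (J t) (I t) v = u"
        using F_onto[where \<sigma>=\<sigma>, OF W[OF t_in] s s0 _ u] r_def by auto
      then have "u = Hcomp H 0 v" using H0 by simp
      then show "u \<in> Hcomp H 0 ` Msub g" using \<open>v \<in> Msub g\<close> by blast
    qed
  qed
  have Ssub: "Hcomp H i ` Msub g \<subseteq> Msub r" for i
  proof (induct i)
    case 0 then show ?case using S0 by simp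
  next
    case (Suc i) then show ?case unfolding img using Hmono by blast
  qed
  have Sinv: "Hcomp H i ` Msub g \<subseteq> Msub m" if "Hcomp H i0 ` Msub g \<subseteq> Msub m" "i0 \<le> i" for i0 i m
    using that(2,1)
  proof (induct i rule: dec_induct)
    case base then show ?case by simp
  next
    case (step n) then show ?case unfolding img using Hmono by blast
  qed
  have hypa: "kdim (Qproj r (I t) ` Hcomp H (l - 1) ` (Msub g :: 'k vect set)) = r"
    using hyp_a unfolding r_def H_def .
  have dimle: "kdim (Qproj r (I t) ` Hcomp H (l - 1) ` (Msub g :: 'k vect set)) \<le> m"
    if sub: "Hcomp H (l - 1) ` Msub g \<subseteq> Msub m" for m
  proof -
    have "kdim (Qproj r (I t) ` Hcomp H (l - 1) ` (Msub g :: 'k vect set)) \<le> card {1..m}"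
    proof (rule dim_supp)
      fix w :: "'k vect" and x assume "w \<in> Qproj r (I t) ` Hcomp H (l - 1) ` Msub g" "x \<notin> {1..m}"
      then obtain v where "v \<in> Msub m" "w = Qproj r (I t) v" using sub by blast
      moreover have "x < 1 \<or> m < x" using \<open>x \<notin> {1..m}\<close> by auto
      ultimately have "v x = 0" unfolding Msub_def by blast
      then show "w x = 0" using \<open>w = Qproj r (I t) v\<close> unfolding Qproj_def by auto
    qed simp
    then show ?thesis by simp
  qed
  have fixI: "\<forall>k\<in>{1..r}. I c k = k" if c: "c < l" "r \<le> fs c" "I c r = r" for c
  proof
    fix k assume k: "k \<in> {1..r}"
    have sm: "\<And>a b. a\<in>{1..r} \<Longrightarrow> b\<in>{1..r} \<Longrightarrow> a < b \<Longrightarrow> I c a < I c b"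
      using Ism[OF W[OF c(1)]] c(2) by auto
    have le: "\<And>k. k\<in>{1..r} \<Longrightarrow> I c k \<le> r"
    proof -
      fix k assume "k \<in> {1..r}"
      then show "I c k \<le> r" using sm[of k r] c(3) by (cases "k = r") auto
    qed
    have "I c k + (r - k) \<le> r" using mono_upper[of r "I c" r k, OF sm le k] by blast
    moreover have "k \<le> I c k" using Ige[OF W[OF c(1)], of k] k c(2) by auto
    ultimately show "I c k = k" using k by auto
  qed
  have P: "\<forall>k\<in>{1..r}. I (cc i) k = k" if i: "1 \<le> i" "i < l" "r \<le> fs (cc i)" for i
  proof (rule ccontr)
    assume np: "\<not> (\<forall>k\<in>{1..r}. I (cc i) k = k)"
    then have r1: "1 \<le> r" by (cases r) auto
    have Icr: "I (cc i) r \<noteq> r" using fixI[OF ccl i(3)] np by blast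
    obtain j where j: "i = Suc j" using i(1) by (cases i) auto
    have "Hcomp H i ` Msub g \<subseteq> Msub (r - 1)"
    proof
      fix w assume "w \<in> Hcomp H i ` Msub g"
      then obtain v where v: "v \<in> Msub r" "w = H i v" using Ssub[of j] unfolding j img by blast
      show "w \<in> Msub (r - 1)" using F_drop[where \<sigma>=\<sigma>, OF W[OF ccl] s0 r1 i(3) Icr v(1)] HF[OF i(3)] v(2) by simp
    qed
    then have "Hcomp H (l - 1) ` Msub g \<subseteq> Msub (r - 1)" using Sinv i by auto
    then have "kdim (Qproj r (I t) ` Hcomp H (l - 1) ` (Msub g :: 'k vect set)) \<le> r - 1" by (rule dimle)
    then show False using hypa r1 by simp
  qed
  have Pt: "\<forall>k\<in>{1..r}. I t k = k"
  proof (rule ccontr)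
    assume np: "\<not> (\<forall>k\<in>{1..r}. I t k = k)"
    then have r1: "1 \<le> r" by (cases r) auto
    have Icr: "I t r \<noteq> r" using fixI[OF t_in] r_def np by auto
    have gt: "I t r > r" using Ige[OF W[OF t_in], of r] Icr r1 r_def by auto
    have "kdim (Qproj r (I t) ` Hcomp H (l - 1) ` (Msub g :: 'k vect set)) \<le> card (I t ` {1..r-1})"
    proof (rule dim_supp)
      fix w :: "'k vect" and x assume w: "w \<in> Qproj r (I t) ` Hcomp H (l - 1) ` Msub g"
        and x: "x \<notin> I t ` {1..r-1}"
      then obtain v where v: "v \<in> Msub r" "w = Qproj r (I t) v" using Ssub by blast
      show "w x = 0"
      proof (cases "x \<in> I t ` {1..r}")
        case True
        then obtain k where k: "k \<in> {1..r}" "x = I t k" by auto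
        then have "k = r" using x by (cases "k = r") auto
        then show ?thesis using v gt k unfolding Msub_def Qproj_def by auto
      next
        case False then show ?thesis using v unfolding Qproj_def by simp
      qed
    qed simp
    also have "\<dots> \<le> card {1..r-1}" by (rule card_image_le) simp
    finally show False using hypa r1 by simp
  qed
  have Pall: "\<forall>k\<in>{1..r}. I (cc i) k = k" if "i < l" "r \<le> fs (cc i)" for i
    using P[OF _ that] Pt cc0 by (cases i) auto
  have one: "\<forall>i<l. Hcomp H i ` Msub g = Msub r"
  proof (intro allI impI)
    fix i show "i < l \<Longrightarrow> Hcomp H i ` Msub g = Msub r"
    proof (induct i)
      case 0 then show ?case using S0 by simp
    next
      case (Suc i)
      then have IH: "Hcomp H i ` Msub g = Msub r" by simp
      have "H (Suc i) ` Msub r = Msub r"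
      proof
        show "H (Suc i) ` Msub r \<subseteq> Msub r" using Hmono by blast
        show "Msub r \<subseteq> H (Suc i) ` Msub r"
        proof
          fix u :: "'k vect" assume u: "u \<in> Msub r"
          show "u \<in> H (Suc i) ` Msub r"
          proof (cases "r \<le> fs (cc (Suc i))")
            case True
            have mx: "\<forall>k\<in>{1..r}. I (cc (Suc i)) k = k" using Pall[OF Suc(2) True] .
            obtain v where v: "\<forall>y. y \<notin> I (cc (Suc i)) ` {1..r} \<longrightarrow> v y = 0"
               "Fmap \<sigma> g (f (cc (Suc i))) (fs (cc (Suc i))) (J (cc (Suc i))) (I (cc (Suc i))) v = u"
              using F_onto[where \<sigma>=\<sigma>, OF W[OF ccl] s s0 True u] by blast
            have "I (cc (Suc i)) ` {1..r} = {1..r}" using mx by force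
            then have "v \<in> Msub r" using v(1) unfolding Msub_def by auto
            moreover have "H (Suc i) v = u" using v(2) HF[OF True] by simp
            ultimately show ?thesis by (metis image_eqI)
          next
            case False
            define v where "v x = (if x \<in> {1..r} then s (u x) else 0)" for x
            have "v \<in> Msub r" unfolding Msub_def v_def by auto
            moreover have "H (Suc i) v = u"
            proof
              fix x show "H (Suc i) v x = u x"
                using False u rg s s0 unfolding Hmax[OF not_le_imp_less[OF False]] v_def Msub_def
                by (cases "x = 0") auto
            qed
            ultimately show ?thesis by (metis image_eqI)
          qed
        qed
      qed
      then show ?case using IH unfolding img by simp
    qed
  qed
  have three: "\<forall>c<l. fs c = fs t \<longrightarrow> maximal (fs c) (I c)"
  proof (intro allI impI)
    fix c assume c: "c < l" "fs c = fs t"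
    show "maximal (fs c) (I c)"
    proof (cases "c = t")
      case True then show ?thesis using Pt r_def unfolding maximal_def by simp
    next
      case False
      define i where "i = (c + l - t) mod l"
      have "cc i = (t + (c + l - t)) mod l" unfolding cc_def i_def by (simp add: mod_add_right_eq)
      also have "\<dots> = c" using t_in c(1) by simp
      finally have ci: "cc i = c" .
      have "i < l" using l0 by (simp add: i_def)
      moreover have "i \<noteq> 0"
      proof
        assume "i = 0" then show False using ci cc0 False by simp
      qed
      ultimately have "\<forall>k\<in>{1..r}. I c k = k" using P[of i] ci c r_def by auto
      then show ?thesis using c r_def unfolding maximal_def by simp
    qed
  qed
  have two: "maximal (fs t) (I t)" using Pt r_def unfolding maximal_def by simp
  have one': "\<forall>i<l. Hcomp (Hmap \<sigma> l g f fs J I t) i ` (Msub g :: 'k vect set) = Msub (fs t)"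
    using one unfolding r_def H_def .
  show ?thesis using one' two three by blast
qed

end
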